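(* Let $\langle M,\sqsubseteq\rangle$ be a mereological structure. Then $\langle M,\mathsf{S}_{\sqsubseteq}\rangle$ satisfies the sum axioms (S1)–(S5) (with $\mathsf{S}:=\mathsf{S}_{\sqsubseteq}$), i.e. it is a sum structure.
   Context: A mereological structure is a pair $\langle M,\sqsubseteq\rangle$ where $M$ is a non-empty set and $\sqsubseteq\subseteq M\times M$ satisfies, for all $x,y,z\in M$: (P1) $x\sqsubseteq x$; (P2) $x\sqsubseteq y\wedge y\sqsubseteq x\to x=y$; (P3) $x\sqsubseteq y\wedge y\sqsubseteq z\to x\sqsubseteq z$; (P4) if $x\not\sqsubseteq y$ then there is $z\in M$ with $z\sqsubseteq x$ such that there is no $u\in M$ with $u\sqsubseteq z$ and $u\sqsubseteq y$; (P5) for every non-empty $X\subseteq M$ there is $x\in M$ such that every $y\in X$ satisfies $y\sqsubseteq x$, and for every $a\in M$ with $a\sqsubseteq x$ there exist $y\in X$ and $z\in M$ with $z\sqsubseteq y$ and $z\sqsubseteq a$. Overlap: $x\circ_{\sqsubseteq} y$ iff there is $z\in M$ with $z\sqsubseteq x$ and $z\sqsubseteq y$. The induced sum relation $\mathsf{S}_{\sqsubseteq}\subseteq M\times\mathcal{P}(M)$: $x\,\mathsf{S}_{\sqsubseteq}\,X$ iff every $y\in X$ satisfies $y\sqsubseteq x$, and for every $a\in M$ with $a\sqsubseteq x$ there is $y\in X$ with $a\circ_{\sqsubseteq} y$. For a set $M$ and a relation $\mathsf{S}\subseteq M\times\mathcal{P}(M)$ define: $x\sqsubseteq_{\mathsf{S}}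 y$ iff there is $X\subseteq M$ with $y\,\mathsf{S}\,X$ and $x\in X$; $\mathrm{I}(x)=\{y\in M\mid y\sqsubseteq_{\mathsf{S}} x\}$ and for $A\subseteq M$, $\mathrm{I}(A)=\bigcup_{a\in A}\mathrm{I}(a)$; $x$ s-overlaps $y$ iff there are $X,Y\subseteq M$ with $x\,\mathsf{S}\,X$, $y\,\mathsf{S}\,Y$, $X\cap Y\neq\emptyset$; a set $A\subseteq M$ is pre-dense in $B\subseteq M$ iff for every $b\in B$ there is $a\in A$ such that $a$ s-overlaps $b$. Sum axioms: (S1) for every non-empty $X\subseteq M$ there is $x\in M$ with $x\,\mathsf{S}\,X$; (S2) $x\,\mathsf{S}\,X\wedge y\,\mathsf{S}\,X\to x=y$; (S3) $x\,\mathsf{S}\,X\wedge y\,\mathsf{S}\,Y\wedge x\in Y\to y\,\mathsf{S}\,(X\cup Y)$; (S4) if $x\,\mathsf{S}\,X$, $x\,\mathsf{S}\,Y$ and $y\in Y$, then there are $z\in X$ and $Z,U\subseteq M$ with $z\,\mathsf{S}\,Z$, $y\,\mathsf{S}\,U$ and $Z\cap U\neq\emptyset$; (S5) for all $x\in M$ and $X\subseteq M$: if $X$ is pre-dense in $\mathrm{I}(x)$ then $x\,\mathsf{S}\,(\mathrm{I}(x)\cap\mathrm{I}(X))$. *)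

theory Defs
  imports Main
begin

definition overlap :: "'a set \<Rightarrow> ('a \<Rightarrow> 'a \<Rightarrow> bool) \<Rightarrow> 'a \<Rightarrow> 'a \<Rightarrow> bool" where
  "overlap M P x y \<longleftrightarrow> (\<exists>z\<in>M. P z x \<and> P z y)"

definition mereological_structure :: "'a set \<Rightarrow> ('a \<Rightarrow> 'a \<Rightarrow> bool) \<Rightarrow> bool" where
  "mereological_structure M P \<longleftrightarrow>
     M \<noteq> {} \<and>
     (\<forall>x y. P x y \<longrightarrow> x \<in> M \<and> y \<in> M) \<and>
     (\<forall>x\<in>M. P x x) \<and>
     (\<forall>x\<in>M. \<forall>y\<in>M. P x y \<and> P y x \<longrightarrow> x = y) \<and>
     (\<forall>x\<in>M. \<forall>y\<in>M. \<forall>z\<in>M. P x y \<and> P y z \<longrightarrow> P x z) \<and>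
     (\<forall>x\<in>M. \<forall>y\<in>M. \<not> P x y \<longrightarrow>
        (\<exists>z\<in>M. P z x \<and> \<not> (\<exists>u\<in>M. P u z \<and> P u y))) \<and>
     (\<forall>X. X \<subseteq> M \<and> X \<noteq> {} \<longrightarrow>
        (\<exists>x\<in>M. (\<forall>y\<in>X. P y x) \<and>
           (\<forall>a\<in>M. P a x \<longrightarrow> (\<exists>y\<in>X. \<exists>z\<in>M. P z y \<and> P z a))))"

definition induced_sum :: "'a set \<Rightarrow> ('a \<Rightarrow> 'a \<Rightarrow> bool) \<Rightarrow> 'a \<Rightarrow> 'a set \<Rightarrow> bool" where
  "induced_sum M P x X \<longleftrightarrow> x \<in> M \<and> X \<subseteq> M \<and>
     (\<forall>y\<in>X. P y x) \<and> (\<forall>a\<in>M. P a x \<longrightarrow> (\<exists>y\<in>X. overlap M P a y))"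

definition s_part :: "'a set \<Rightarrow> ('a \<Rightarrow> 'a set \<Rightarrow> bool) \<Rightarrow> 'a \<Rightarrow> 'a \<Rightarrow> bool" where
  "s_part M S x y \<longleftrightarrow> (\<exists>X. X \<subseteq> M \<and> S y X \<and> x \<in> X)"

definition ideal_of :: "'a set \<Rightarrow> ('a \<Rightarrow> 'a set \<Rightarrow> bool) \<Rightarrow> 'a \<Rightarrow> 'a set" where
  "ideal_of M S x = {y \<in> M. s_part M S y x}"

definition ideal_set :: "'a set \<Rightarrow> ('a \<Rightarrow> 'a set \<Rightarrow> bool) \<Rightarrow> 'a set \<Rightarrow> 'a set" where
  "ideal_set M S A = (\<Union>a\<in>A. ideal_of M S a)"

definition s_overlaps :: "'a set \<Rightarrow> ('a \<Rightarrow> 'a set \<Rightarrow> bool) \<Rightarrow> 'a \<Rightarrow> 'a \<Rightarrow> bool" where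
  "s_overlaps M S x y \<longleftrightarrow>
     (\<exists>X Y. X \<subseteq> M \<and> Y \<subseteq> M \<and> S x X \<and> S y Y \<and> X \<inter> Y \<noteq> {})"

definition pre_dense :: "'a set \<Rightarrow> ('a \<Rightarrow> 'a set \<Rightarrow> bool) \<Rightarrow> 'a set \<Rightarrow> 'a set \<Rightarrow> bool" where
  "pre_dense M S A B \<longleftrightarrow> (\<forall>b\<in>B. \<exists>a\<in>A. s_overlaps M S a b)"

definition sum_structure :: "'a set \<Rightarrow> ('a \<Rightarrow> 'a set \<Rightarrow> bool) \<Rightarrow> bool" where
  "sum_structure M S \<longleftrightarrow>
     (\<forall>x X. S x X \<longrightarrow> x \<in> M \<and> X \<subseteq> M) \<and>
     \<comment> \<open>S1\<close>
     (\<forall>X. X \<subseteq> M \<and> X \<noteq> {} \<longrightarrow> (\<exists>x\<in>M. S x X)) \<and>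
     \<comment> \<open>S2\<close>
     (\<forall>x\<in>M. \<forall>y\<in>M. \<forall>X. X \<subseteq> M \<longrightarrow> S x X \<and> S y X \<longrightarrow> x = y) \<and>
     \<comment> \<open>S3\<close>
     (\<forall>x\<in>M. \<forall>y\<in>M. \<forall>X Y. X \<subseteq> M \<and> Y \<subseteq> M \<longrightarrow>
        S x X \<and> S y Y \<and> x \<in> Y \<longrightarrow> S y (X \<union> Y)) \<and>
     \<comment> \<open>S4\<close>
     (\<forall>x\<in>M. \<forall>y\<in>M. \<forall>X Y. X \<subseteq> M \<and> Y \<subseteq> M \<longrightarrow>
        S x X \<and> S x Y \<and> y \<in> Y \<longrightarrow>
        (\<exists>z\<in>X. \<exists>Z U. Z \<subseteq> M \<and> U \<subseteq> M \<and> S z Z \<and> S y U \<and> Z \<inter> U \<noteq> {})) \<and>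
     \<comment> \<open>S5\<close>
     (\<forall>x\<in>M. \<forall>X. X \<subseteq> M \<longrightarrow>
        pre_dense M S X (ideal_of M S x) \<longrightarrow>
        S x (ideal_of M S x \<inter> ideal_set M S X))"

end

theory Submission
  imports Defs
begin

lemma ms:
  assumes "mereological_structure M P"
  shows ms_dom: "\<And>x y. P x y \<Longrightarrow> x \<in> M \<and> y \<in> M"
   and ms_refl: "\<And>x. x \<in> M \<Longrightarrow> P x x"
   and ms_anti: "\<And>x y. P x y \<Longrightarrow> P y x \<Longrightarrow> x = y"
   and ms_trans: "\<And>x y z. P x y \<Longrightarrow> P y z \<Longrightarrow> P x z"
   and ms_p4: "\<And>x y. x \<in> M \<Longrightarrow> y \<in> M \<Longrightarrow> \<not> P x y \<Longrightarrow> \<exists>z\<in>M. P z x \<and> \<not> (\<exists>u\<in>M. P u z \<and> P u y)"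
   and ms_p5: "\<And>X. X \<subseteq> M \<Longrightarrow> X \<noteq> {} \<Longrightarrow> (\<exists>x\<in>M. (\<forall>y\<in>X. P y x) \<and>
           (\<forall>a\<in>M. P a x \<longrightarrow> (\<exists>y\<in>X. \<exists>z\<in>M. P z y \<and> P z a)))"
proof -
  have A1: "(\<forall>x y. P x y \<longrightarrow> x \<in> M \<and> y \<in> M)" using assms unfolding mereological_structure_def by (elim conjE) assumption
  have A2: "(\<forall>x\<in>M. P x x)" using assms unfolding mereological_structure_def by (elim conjE) assumption
  have A3: "(\<forall>x\<in>M. \<forall>y\<in>M. P x y \<and> P y x \<longrightarrow> x = y)" using assms unfolding mereological_structure_def by (elim conjE) assumption
  have A4: "(\<forall>x\<in>M. \<forall>y\<in>M. \<forall>z\<in>M. P x y \<and> P y z \<longrightarrow> P x z)" using assms unfolding mereological_structure_def by (elim conjE) assumption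
  have A5: "(\<forall>x\<in>M. \<forall>y\<in>M. \<not> P x y \<longrightarrow>
        (\<exists>z\<in>M. P z x \<and> \<not> (\<exists>u\<in>M. P u z \<and> P u y)))" using assms unfolding mereological_structure_def by (elim conjE) assumption
  have A6: "(\<forall>X. X \<subseteq> M \<and> X \<noteq> {} \<longrightarrow>
        (\<exists>x\<in>M. (\<forall>y\<in>X. P y x) \<and>
           (\<forall>a\<in>M. P a x \<longrightarrow> (\<exists>y\<in>X. \<exists>z\<in>M. P z y \<and> P z a))))" using assms unfolding mereological_structure_def by (elim conjE) assumption
  note A = A1 A2 A3 A4 A5 A6
  show "\<And>x y. P x y \<Longrightarrow> x \<in> M \<and> y \<in> M" using A(1) by blast
  show "\<And>x. x \<in> M \<Longrightarrow> P x x" using A(2) by blast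
  show "\<And>x y. P x y \<Longrightarrow> P y x \<Longrightarrow> x = y" using A(1,3) by blast
  show "\<And>x y z. P x y \<Longrightarrow> P y z \<Longrightarrow> P x z" using A(1,4) by blast
  show "\<And>x y. x \<in> M \<Longrightarrow> y \<in> M \<Longrightarrow> \<not> P x y \<Longrightarrow> \<exists>z\<in>M. P z x \<and> \<not> (\<exists>u\<in>M. P u z \<and> P u y)" using A(5) by blast
  show "\<And>X. X \<subseteq> M \<Longrightarrow> X \<noteq> {} \<Longrightarrow> (\<exists>x\<in>M. (\<forall>y\<in>X. P y x) \<and>
           (\<forall>a\<in>M. P a x \<longrightarrow> (\<exists>y\<in>X. \<exists>z\<in>M. P z y \<and> P z a)))" using A(6) by blast
qed

lemma sum_two:
  assumes "mereological_structure M P" "P x y"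
  shows "induced_sum M P y {x, y}"
proof -
  have xy: "x \<in> M" "y \<in> M" using ms_dom[OF assms(1) assms(2)] by auto
  have "overlap M P a y" if "a \<in> M" "P a y" for a
    unfolding overlap_def using that ms_refl[OF assms(1)] by blast
  then show ?thesis unfolding induced_sum_def using xy assms(2) ms_refl[OF assms(1)] by auto
qed

lemma spart_iff:
  assumes "mereological_structure M P" "x \<in> M" "y \<in> M"
  shows "s_part M (induced_sum M P) x y \<longleftrightarrow> P x y"
proof
  assume "s_part M (induced_sum M P) x y"
  then obtain X where "induced_sum M P y X" "x \<in> X" unfolding s_part_def by blast
  then show "P x y" unfolding induced_sum_def by blast
next
  assume h: "P x y"
  have "induced_sum M P y {x, y}" using sum_two[OF assms(1) h] .
  moreover have "{x, y} \<subseteq> M" using assms by auto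
  ultimately show "s_part M (induced_sum M P) x y" unfolding s_part_def by blast
qed

lemma ideal_eq:
  assumes "mereological_structure M P" "x \<in> M"
  shows "ideal_of M (induced_sum M P) x = {y \<in> M. P y x}"
  using spart_iff[OF assms(1) _ assms(2)] unfolding ideal_of_def by blast

lemma sov_iff:
  assumes "mereological_structure M P" "x \<in> M" "y \<in> M"
  shows "s_overlaps M (induced_sum M P) x y \<longleftrightarrow> overlap M P x y"
proof
  assume "s_overlaps M (induced_sum M P) x y"
  then obtain X Y w where "induced_sum M P x X" "induced_sum M P y Y" "w \<in> X" "w \<in> Y"
    unfolding s_overlaps_def by blast
  then have "w \<in> M" "P w x" "P w y" unfolding induced_sum_def by auto
  then show "overlap M P x y" unfolding overlap_def by blast
next
  assume "overlap M P x y"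
  then obtain z where z: "z \<in> M" "P z x" "P z y" unfolding overlap_def by blast
  have "induced_sum M P x {z, x}" "induced_sum M P y {z, y}"
    using sum_two[OF assms(1)] z by auto
  moreover have "{z, x} \<subseteq> M" "{z, y} \<subseteq> M" using assms z by auto
  ultimately show "s_overlaps M (induced_sum M P) x y" unfolding s_overlaps_def by blast
qed

theorem theorem4p1:
  fixes M :: "'a set" and P :: "'a \<Rightarrow> 'a \<Rightarrow> bool"
  assumes "mereological_structure M P"
  shows "sum_structure M (induced_sum M P)"
proof -
  note mdom = ms_dom[OF assms] and mrefl = ms_refl[OF assms] and manti = ms_anti[OF assms]
    and mtrans = ms_trans[OF assms] and p4 = ms_p4[OF assms] and p5 = ms_p5[OF assms]
  let ?S = "induced_sum M P"
  have S1: "\<forall>X. X \<subseteq> M \<and> X \<noteq> {} \<longrightarrow> (\<exists>x\<in>M. ?S x X)"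
  proof (intro allI impI)
    fix X assume XM: "X \<subseteq> M \<and> X \<noteq> {}"
    then obtain x where x: "x \<in> M" "\<forall>y\<in>X. P y x"
      and c: "\<forall>a\<in>M. P a x \<longrightarrow> (\<exists>y\<in>X. \<exists>z\<in>M. P z y \<and> P z a)"
      using p5[of X] by blast
    have "\<forall>a\<in>M. P a x \<longrightarrow> (\<exists>y\<in>X. overlap M P a y)"
    proof (intro ballI impI)
      fix a assume "a \<in> M" "P a x"
      then obtain y z where "y \<in> X" "z \<in> M" "P z y" "P z a" using c by blast
      then show "\<exists>y\<in>X. overlap M P a y" unfolding overlap_def by blast
    qed
    then have "?S x X" unfolding induced_sum_def using x XM by blast
    then show "\<exists>x\<in>M. ?S x X" using x by blast
  qed
  have le: "P x y" if "?S x X" "?S y X" for x y X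
  proof (rule ccontr)
    assume n: "\<not> P x y"
    have "x \<in> M" "y \<in> M" using that unfolding induced_sum_def by auto
    then obtain z where z: "z \<in> M" "P z x" "\<not> (\<exists>u\<in>M. P u z \<and> P u y)" using p4 n by blast
    have "\<forall>a\<in>M. P a x \<longrightarrow> (\<exists>y\<in>X. overlap M P a y)" using that(1) unfolding induced_sum_def by blast
    then obtain w where w: "w \<in> X" "overlap M P z w" using z by blast
    then obtain u where "u \<in> M" "P u z" "P u w" unfolding overlap_def by blast
    moreover have "P w y" using that(2) w unfolding induced_sum_def by blast
    ultimately have "P u y" "u \<in> M" "P u z" using mtrans by blast+
    then show False using z(3) by blast
  qed
  have S2: "\<forall>x\<in>M. \<forall>y\<in>M. \<forall>X. X \<subseteq> M \<longrightarrow> ?S x X \<and> ?S y X \<longrightarrow> x = y"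
  proof (intro ballI allI impI)
    fix x y X assume "x \<in> M" "y \<in> M" "X \<subseteq> M" and h: "?S x X \<and> ?S y X"
    then have "P x y" "P y x" using le by blast+
    then show "x = y" by (rule manti)
  qed
  have S3: "\<forall>x\<in>M. \<forall>y\<in>M. \<forall>X Y. X \<subseteq> M \<and> Y \<subseteq> M \<longrightarrow>
        ?S x X \<and> ?S y Y \<and> x \<in> Y \<longrightarrow> ?S y (X \<union> Y)"
  proof (intro ballI allI impI)
    fix x y X Y assume h: "x \<in> M" "y \<in> M" "X \<subseteq> M \<and> Y \<subseteq> M" "?S x X \<and> ?S y Y \<and> x \<in> Y"
    then have hx: "\<forall>z\<in>X. P z x" and hy: "\<forall>z\<in>Y. P z y"
      and c: "\<forall>a\<in>M. P a y \<longrightarrow> (\<exists>z\<in>Y. overlap M P a z)"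
      and "P x y" unfolding induced_sum_def by auto
    have "\<forall>z\<in>X. P z y"
    proof
      fix z assume "z \<in> X"
      then have "P z x" using hx by blast
      then show "P z y" using mtrans \<open>P x y\<close> by blast
    qed
    then show "?S y (X \<union> Y)" unfolding induced_sum_def using h hy c by blast
  qed
  have S4: "\<forall>x\<in>M. \<forall>y\<in>M. \<forall>X Y. X \<subseteq> M \<and> Y \<subseteq> M \<longrightarrow>
        ?S x X \<and> ?S x Y \<and> y \<in> Y \<longrightarrow>
        (\<exists>z\<in>X. \<exists>Z U. Z \<subseteq> M \<and> U \<subseteq> M \<and> ?S z Z \<and> ?S y U \<and> Z \<inter> U \<noteq> {})"
  proof (intro ballI allI impI)
    fix x y X Y assume h: "x \<in> M" "y \<in> M" "X \<subseteq> M \<and> Y \<subseteq> M" "?S x X \<and> ?S x Y \<and> y \<in> Y"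
    then have "P y x" unfolding induced_sum_def by blast
    then obtain z where z: "z \<in> X" "overlap M P y z" using h unfolding induced_sum_def by blast
    then have "overlap M P z y" unfolding overlap_def by blast
    then have "s_overlaps M ?S z y" using sov_iff[OF assms, of z y] h z by blast
    then show "\<exists>z\<in>X. \<exists>Z U. Z \<subseteq> M \<and> U \<subseteq> M \<and> ?S z Z \<and> ?S y U \<and> Z \<inter> U \<noteq> {}"
      using z unfolding s_overlaps_def by blast
  qed
  have S5: "\<forall>x\<in>M. \<forall>X. X \<subseteq> M \<longrightarrow>
        pre_dense M ?S X (ideal_of M ?S x) \<longrightarrow>
        ?S x (ideal_of M ?S x \<inter> ideal_set M ?S X)"
  proof (intro ballI allI impI)
    fix x X assume x: "x \<in> M" and X: "X \<subseteq> M" and pd: "pre_dense M ?S X (ideal_of M ?S x)"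
    have ix: "ideal_of M ?S x = {y \<in> M. P y x}" using ideal_eq[OF assms x] .
    have iX: "ideal_set M ?S X = {y \<in> M. \<exists>a\<in>X. P y a}"
      unfolding ideal_set_def using ideal_eq[OF assms] X by blast
    have pd2: "\<forall>b\<in>M. P b x \<longrightarrow> (\<exists>a\<in>X. overlap M P a b)"
      using pd sov_iff[OF assms] X unfolding pre_dense_def ix by blast
    show "?S x (ideal_of M ?S x \<inter> ideal_set M ?S X)"
      unfolding ix iX induced_sum_def
    proof (intro conjI ballI impI)
      show "x \<in> M" by fact
      show "{y \<in> M. P y x} \<inter> {y \<in> M. \<exists>a\<in>X. P y a} \<subseteq> M" by blast
      fix y assume "y \<in> {y \<in> M. P y x} \<inter> {y \<in> M. \<exists>a\<in>X. P y a}"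
      then show "P y x" by blast
    next
      fix b assume b: "b \<in> M" "P b x"
      then obtain a w where "a \<in> X" "w \<in> M" "P w a" "P w b" using pd2 unfolding overlap_def by blast
      moreover have "P w x" using mtrans[OF \<open>P w b\<close> b(2)] .
      ultimately show "\<exists>y\<in>{y \<in> M. P y x} \<inter> {y \<in> M. \<exists>a\<in>X. P y a}. overlap M P b y"
        unfolding overlap_def using mrefl by blast
    qed
  qed
  have S0: "\<forall>x X. ?S x X \<longrightarrow> x \<in> M \<and> X \<subseteq> M" unfolding induced_sum_def by blast
  show ?thesis unfolding sum_structure_def by (rule conjI[OF S0 conjI[OF S1 conjI[OF S2 conjI[OF S3 conjI[OF S4 S5]]]]])
qed

end
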